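(* Let $A$ be a finite skew brace, $k$ a field, and $(V,\beta,\rho)$ an irreducible representation of $A$ over $k$. Then the group representation $(V,\beta)$ of $(A,\cdot)$ is completely reducible (i.e. $V$ is semisimple as a $k(A,\cdot)$-module).
   Context: A skew brace is a set $A$ with two group operations $\cdot$ and $\circ$ such that $a\circ(b\cdot c)=(a\circ b)\cdot a^{-1}\cdot(a\circ c)$ for all $a,b,c\in A$; here $a^{-1}$ is the inverse in $(A,\cdot)$. For $a\in A$ let $\lambda^{\mathrm{op}}_a(b)=(a\circ b)\cdot a^{-1}$. A representation of $A$ over $k$ is a triple $(V,\beta,\rho)$ with $V$ a $k$-vector space, $\beta:(A,\cdot)\to\mathrm{GL}(V)$, $\rho:(A,\circ)\to\mathrm{GL}(V)$ group homomorphisms such that $\beta(\lambda^{\mathrm{op}}_a(b))=\rho(a)\beta(b)\rho(a)^{-1}$ for all $a,b\in A$. It is irreducible if $V\ne 0$ and the only subspaces of $V$ invariant under all $\beta(a)$ and all $\rho(b)$ ($a,b\in A$) are $0$ and $V$. *)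

theory Defs
  imports Main "HOL.Vector_Spaces" "HOL-Algebra.Group"
begin

definition skew_brace :: "('a, 'm) monoid_scheme \<Rightarrow> ('a, 'n) monoid_scheme \<Rightarrow> bool" where
  "skew_brace G H \<longleftrightarrow> group G \<and> group H \<and> carrier G = carrier H \<and>
     (\<forall>a\<in>carrier G. \<forall>b\<in>carrier G. \<forall>c\<in>carrier G.
        a \<otimes>\<^bsub>H\<^esub> (b \<otimes>\<^bsub>G\<^esub> c)
          = (a \<otimes>\<^bsub>H\<^esub> b) \<otimes>\<^bsub>G\<^esub> inv\<^bsub>G\<^esub> a \<otimes>\<^bsub>G\<^esub> (a \<otimes>\<^bsub>H\<^esub> c))"

definition lambda_op :: "('a, 'm) monoid_scheme \<Rightarrow> ('a, 'n) monoid_scheme \<Rightarrow> 'a \<Rightarrow> 'a \<Rightarrow> 'a" where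
  "lambda_op G H a b = (a \<otimes>\<^bsub>H\<^esub> b) \<otimes>\<^bsub>G\<^esub> inv\<^bsub>G\<^esub> a"

text \<open>Group homomorphism from a group into GL(V), V being the whole type 'v with
  scalar multiplication scale.\<close>
definition GL_hom :: "('k::field \<Rightarrow> 'v::ab_group_add \<Rightarrow> 'v) \<Rightarrow> ('a, 'm) monoid_scheme
     \<Rightarrow> ('a \<Rightarrow> 'v \<Rightarrow> 'v) \<Rightarrow> bool" where
  "GL_hom scale G f \<longleftrightarrow>
     (\<forall>a\<in>carrier G. Vector_Spaces.linear scale scale (f a) \<and> bij (f a)) \<and>
     (\<forall>a\<in>carrier G. \<forall>b\<in>carrier G. f (a \<otimes>\<^bsub>G\<^esub> b) = f a \<circ> f b)"

definition skew_brace_rep :: "('a, 'm) monoid_scheme \<Rightarrow> ('a, 'n) monoid_scheme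
     \<Rightarrow> ('k::field \<Rightarrow> 'v::ab_group_add \<Rightarrow> 'v) \<Rightarrow> ('a \<Rightarrow> 'v \<Rightarrow> 'v) \<Rightarrow> ('a \<Rightarrow> 'v \<Rightarrow> 'v) \<Rightarrow> bool" where
  "skew_brace_rep G H scale \<beta> \<rho> \<longleftrightarrow>
     vector_space scale \<and> GL_hom scale G \<beta> \<and> GL_hom scale H \<rho> \<and>
     (\<forall>a\<in>carrier G. \<forall>b\<in>carrier G.
        \<beta> (lambda_op G H a b) = \<rho> a \<circ> \<beta> b \<circ> inv_into UNIV (\<rho> a))"

definition irreducible_rep :: "('a, 'm) monoid_scheme \<Rightarrow> ('a, 'n) monoid_scheme
     \<Rightarrow> ('k::field \<Rightarrow> 'v::ab_group_add \<Rightarrow> 'v) \<Rightarrow> ('a \<Rightarrow> 'v \<Rightarrow> 'v) \<Rightarrow> ('a \<Rightarrow> 'v \<Rightarrow> 'v) \<Rightarrow> bool" where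
  "irreducible_rep G H scale \<beta> \<rho> \<longleftrightarrow>
     skew_brace_rep G H scale \<beta> \<rho> \<and> (UNIV :: 'v set) \<noteq> {0} \<and>
     (\<forall>W. module.subspace scale W \<and> (\<forall>a\<in>carrier G. \<beta> a ` W \<subseteq> W) \<and>
          (\<forall>a\<in>carrier G. \<rho> a ` W \<subseteq> W) \<longrightarrow> W = {0} \<or> W = UNIV)"

definition completely_reducible :: "('a, 'm) monoid_scheme
     \<Rightarrow> ('k::field \<Rightarrow> 'v::ab_group_add \<Rightarrow> 'v) \<Rightarrow> ('a \<Rightarrow> 'v \<Rightarrow> 'v) \<Rightarrow> bool" where
  "completely_reducible G scale f \<longleftrightarrow>
     (\<forall>W. module.subspace scale W \<and> (\<forall>a\<in>carrier G. f a ` W \<subseteq> W) \<longrightarrow>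
        (\<exists>U. module.subspace scale U \<and> (\<forall>a\<in>carrier G. f a ` U \<subseteq> U) \<and>
             W \<inter> U = {0} \<and> {w + u | w u. w \<in> W \<and> u \<in> U} = UNIV))"

end

theory Submission
  imports Defs
begin

theorem proposition3p3:
  fixes G :: "('a, 'm) monoid_scheme" and H :: "('a, 'n) monoid_scheme"
    and scale :: "'k::field \<Rightarrow> 'v::ab_group_add \<Rightarrow> 'v"
    and \<beta> \<rho> :: "'a \<Rightarrow> 'v \<Rightarrow> 'v"
  assumes "skew_brace G H"
    and "finite (carrier G)"
    and "irreducible_rep G H scale \<beta> \<rho>"
  shows "completely_reducible G scale \<beta>"
proof -
  have gG: "group G" and gH: "group H" and cGH: "carrier H = carrier G"
    using assms(1) by (auto simp: skew_brace_def)
  have vs: "vector_space scale" and GLb: "GL_hom scale G \<beta>" and GLr: "GL_hom scale H \<rho>"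
    and conj: "\<And>a b. a \<in> carrier G \<Longrightarrow> b \<in> carrier G \<Longrightarrow>
        \<beta> (lambda_op G H a b) = \<rho> a \<circ> \<beta> b \<circ> inv_into UNIV (\<rho> a)"
    and nz: "(UNIV :: 'v set) \<noteq> {0}"
    and irr: "\<And>W. module.subspace scale W \<Longrightarrow> (\<forall>a\<in>carrier G. \<beta> a ` W \<subseteq> W) \<Longrightarrow>
          (\<forall>a\<in>carrier G. \<rho> a ` W \<subseteq> W) \<Longrightarrow> W = {0} \<or> W = UNIV"
    using assms(3) by (auto simp: irreducible_rep_def skew_brace_rep_def)
  interpret vector_space scale by (rule vs)
  have linb: "\<And>a. a \<in> carrier G \<Longrightarrow> Vector_Spaces.linear scale scale (\<beta> a)"
    using GLb by (auto simp: GL_hom_def)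
  have linr: "\<And>a. a \<in> carrier G \<Longrightarrow> Vector_Spaces.linear scale scale (\<rho> a)"
    using GLr cGH by (auto simp: GL_hom_def)
  have bijr: "\<And>a. a \<in> carrier G \<Longrightarrow> bij (\<rho> a)"
    using GLr cGH by (auto simp: GL_hom_def)
  have homr: "\<And>a b. a \<in> carrier G \<Longrightarrow> b \<in> carrier G \<Longrightarrow> \<rho> (a \<otimes>\<^bsub>H\<^esub> b) = \<rho> a \<circ> \<rho> b"
    using GLr cGH by (auto simp: GL_hom_def)
  have b0: "\<beta> a 0 = 0" if "a \<in> carrier G" for a
    using linb[OF that] by (metis linear_iff scale_zero_left)
  have r0: "\<rho> a 0 = 0" if "a \<in> carrier G" for a
    using linr[OF that] by (metis linear_iff scale_zero_left)
  have badd: "\<beta> a (x + y) = \<beta> a x + \<beta> a y" if "a \<in> carrier G" for a x y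
    using linb[OF that] by (simp add: linear_iff)
  have radd: "\<rho> a (x + y) = \<rho> a x + \<rho> a y" if "a \<in> carrier G" for a x y
    using linr[OF that] by (simp add: linear_iff)
  have rinj: "\<rho> a x = \<rho> a y \<Longrightarrow> x = y" if "a \<in> carrier G" for a x y
    using bijr[OF that] by (meson bij_def injD)
  have comm: "\<rho> a (\<beta> b v) = \<beta> (lambda_op G H a b) (\<rho> a v)"
    if "a \<in> carrier G" "b \<in> carrier G" for a b v
  proof -
    have "inv_into UNIV (\<rho> a) (\<rho> a v) = v"
      using bijr[OF that(1)] by (simp add: bij_def inv_into_f_f)
    then show ?thesis using conj[OF that] by simp
  qed
  have lam_closed: "lambda_op G H a b \<in> carrier G" if "a \<in> carrier G" "b \<in> carrier G" for a b
    using that gG gH cGH unfolding lambda_op_def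
    by (metis group.inv_closed group.subgroup_self subgroup.m_closed)
  have lam_surj: "\<exists>b\<in>carrier G. lambda_op G H a b = c" if "a \<in> carrier G" "c \<in> carrier G" for a c
  proof -
    define b where "b = inv\<^bsub>H\<^esub> a \<otimes>\<^bsub>H\<^esub> (c \<otimes>\<^bsub>G\<^esub> a)"
    have ca: "c \<otimes>\<^bsub>G\<^esub> a \<in> carrier G" using that gG by (simp add: group.is_monoid monoid.m_closed)
    have bc: "b \<in> carrier G" unfolding b_def using that ca gH cGH
      by (metis group.inv_closed group.is_monoid monoid.m_closed)
    have "a \<otimes>\<^bsub>H\<^esub> b = c \<otimes>\<^bsub>G\<^esub> a" unfolding b_def using that ca gH cGH
      by (metis group.inv_closed group.is_monoid group.r_inv monoid.l_one monoid.m_assoc)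
    then have "lambda_op G H a b = c"
      unfolding lambda_op_def using that gG
      by (simp add: group.is_monoid monoid.m_assoc group.r_inv)
    with bc show ?thesis by blast
  qed
  define binv where "binv X \<longleftrightarrow> (\<forall>a\<in>carrier G. \<beta> a ` X \<subseteq> X)" for X
  define ess where "ess E \<longleftrightarrow> (\<forall>X. subspace X \<and> binv X \<and> X \<noteq> {0} \<longrightarrow> (\<exists>x\<in>X \<inter> E. x \<noteq> 0))" for E
  have binv_int: "binv (A \<inter> B)" if "binv A" "binv B" for A B
    using that unfolding binv_def by blast
  have essD: "\<exists>x\<in>X \<inter> E. x \<noteq> 0" if "ess E" "subspace X" "binv X" "X \<noteq> {0}" for E X
    using that unfolding ess_def by blast
  have essI: "ess E" if "\<And>X. subspace X \<Longrightarrow> binv X \<Longrightarrow> X \<noteq> {0} \<Longrightarrow> \<exists>x\<in>X \<inter> E. x \<noteq> 0" for E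
    using that unfolding ess_def by blast
  show ?thesis unfolding completely_reducible_def
  proof (intro allI impI)
    fix W assume "subspace W \<and> (\<forall>a\<in>carrier G. \<beta> a ` W \<subseteq> W)"
    then have sW: "subspace W" and iW: "binv W" by (auto simp: binv_def)
    define \<A> where "\<A> = {U. subspace U \<and> binv U \<and> W \<inter> U = {0}}"
    have "\<exists>M\<in>\<A>. \<forall>X\<in>\<A>. M \<subseteq> X \<longrightarrow> X = M"
    proof (rule Zorn_Lemma2, intro ballI)
      fix C assume C: "C \<in> chains \<A>"
      show "\<exists>U\<in>\<A>. \<forall>X\<in>C. X \<subseteq> U"
      proof (cases "C = {}")
        case True
        have "{0} \<in> \<A>" unfolding \<A>_def binv_def using sW b0 by (auto simp: subspace_0)
        then show ?thesis using True by blast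
      next
        case False
        have CA: "C \<subseteq> \<A>" and ch: "\<And>X Y. X \<in> C \<Longrightarrow> Y \<in> C \<Longrightarrow> X \<subseteq> Y \<or> Y \<subseteq> X"
          using C by (auto simp: chains_def chain_subset_def)
        have "\<Union>C \<in> \<A>" unfolding \<A>_def
        proof (intro CollectI conjI)
          show "subspace (\<Union>C)"
          proof (rule subspaceI)
            show "0 \<in> \<Union>C" using False CA by (auto simp: \<A>_def subspace_0)
            fix x y assume "x \<in> \<Union>C" "y \<in> \<Union>C"
            then obtain X Y where "X \<in> C" "Y \<in> C" "x \<in> X" "y \<in> Y" by auto
            with ch[of X Y] CA show "x + y \<in> \<Union>C"
              by (auto simp: \<A>_def intro: subspace_add)
          next
            fix c x assume "x \<in> \<Union>C"
            then show "scale c x \<in> \<Union>C" using CA by (auto simp: \<A>_def intro: subspace_scale)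
          qed
          show "binv (\<Union>C)" using CA unfolding \<A>_def binv_def by blast
          show "W \<inter> \<Union>C = {0}" using CA False sW by (auto simp: \<A>_def subspace_0)
        qed
        then show ?thesis by blast
      qed
    qed
    then obtain U where UA: "U \<in> \<A>" and Umax: "\<And>X. X \<in> \<A> \<Longrightarrow> U \<subseteq> X \<Longrightarrow> X = U" by blast
    have sU: "subspace U" and iU: "binv U" and WU: "W \<inter> U = {0}" using UA by (auto simp: \<A>_def)
    define Y where "Y = {w + u | w u. w \<in> W \<and> u \<in> U}"
    have sY: "subspace Y" unfolding Y_def by (rule subspace_sums[OF sW sU])
    have sum_inv: "binv {x + y | x y. x \<in> S \<and> y \<in> T}" if "binv S" "binv T" for S T
      using that unfolding binv_def image_subset_iff
      by (auto simp: badd) (metis)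
    have iY: "binv Y" unfolding Y_def by (rule sum_inv[OF iW iU])
    have essY: "ess Y" unfolding ess_def
    proof (intro allI impI)
      fix X assume X: "subspace X \<and> binv X \<and> X \<noteq> {0}"
      show "\<exists>x\<in>X \<inter> Y. x \<noteq> 0"
      proof (rule ccontr)
        assume "\<not> ?thesis"
        then have XY: "\<And>x. x \<in> X \<Longrightarrow> x \<in> Y \<Longrightarrow> x = 0" by blast
        define U' where "U' = {u + x | u x. u \<in> U \<and> x \<in> X}"
        have "U' \<in> \<A>" unfolding \<A>_def
        proof (intro CollectI conjI)
          show "subspace U'" unfolding U'_def using sU X by (intro subspace_sums) auto
          show "binv U'" unfolding U'_def using iU X by (intro sum_inv) auto
          show "W \<inter> U' = {0}"
          proof
            show "W \<inter> U' \<subseteq> {0}"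
            proof
              fix v assume v: "v \<in> W \<inter> U'"
              then obtain u x where ux: "u \<in> U" "x \<in> X" "v = u + x" by (auto simp: U'_def)
              have "x = v + (- u)" using ux by simp
              moreover have "v + (- u) \<in> Y" unfolding Y_def using v ux sU subspace_neg by blast
              ultimately have "x = 0" using XY ux by auto
              then have "v \<in> W \<inter> U" using v ux by auto
              then show "v \<in> {0}" using WU by auto
            qed
            show "{0} \<subseteq> W \<inter> U'" unfolding U'_def using sW sU X subspace_0 by fastforce
          qed
        qed
        moreover have "U \<subseteq> U'" unfolding U'_def using X subspace_0 by force
        ultimately have "U' = U" using Umax by blast
        then have "X \<subseteq> U" unfolding U'_def using sU subspace_0 by force
        then have "X \<subseteq> Y" unfolding Y_def using sW subspace_0 by force
        moreover obtain x0 where "x0 \<in> X" "x0 \<noteq> 0" using X subspace_0 by blast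
        ultimately show False using XY by blast
      qed
    qed
    have pre: "subspace (\<rho> a -` Y) \<and> binv (\<rho> a -` Y) \<and> ess (\<rho> a -` Y)" if a: "a \<in> carrier G" for a
    proof (intro conjI)
      show "subspace (\<rho> a -` Y)"
        using sY linr[OF a] by (simp add: linear_iff subspace_def r0[OF a] linr)
      show "binv (\<rho> a -` Y)" unfolding binv_def
      proof (intro ballI subsetI)
        fix b v assume b: "b \<in> carrier G" and "v \<in> \<beta> b ` (\<rho> a -` Y)"
        then obtain x where x: "\<rho> a x \<in> Y" "v = \<beta> b x" by auto
        have "\<rho> a v = \<beta> (lambda_op G H a b) (\<rho> a x)" using comm[OF a b] x by simp
        also have "\<dots> \<in> Y" using iY x lam_closed[OF a b] unfolding binv_def by blast
        finally show "v \<in> \<rho> a -` Y" by simp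
      qed
      show "ess (\<rho> a -` Y)" unfolding ess_def
      proof (intro allI impI)
        fix X assume X: "subspace X \<and> binv X \<and> X \<noteq> {0}"
        have "subspace (\<rho> a ` X)"
          using X linr[OF a] r0[OF a] unfolding subspace_def linear_iff by (auto simp: image_iff) (metis)+
        moreover have "binv (\<rho> a ` X)" unfolding binv_def
        proof (intro ballI subsetI)
          fix c v assume c: "c \<in> carrier G" and "v \<in> \<beta> c ` \<rho> a ` X"
          then obtain x where x: "x \<in> X" "v = \<beta> c (\<rho> a x)" by auto
          obtain b where b: "b \<in> carrier G" "lambda_op G H a b = c" using lam_surj[OF a c] by blast
          have "v = \<rho> a (\<beta> b x)" using comm[OF a b(1)] b x by simp
          moreover have "\<beta> b x \<in> X" using X b x unfolding binv_def by blast
          ultimately show "v \<in> \<rho> a ` X" by blast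
        qed
        moreover have "\<rho> a ` X \<noteq> {0}"
        proof
          assume h: "\<rho> a ` X = {0}"
          obtain x where "x \<in> X" "x \<noteq> 0" using X subspace_0 by blast
          then have "\<rho> a x = \<rho> a 0" using h r0[OF a] by auto
          then show False using rinj[OF a] \<open>x \<noteq> 0\<close> by blast
        qed
        ultimately obtain y where y: "y \<in> \<rho> a ` X" "y \<in> Y" "y \<noteq> 0"
          using essY unfolding ess_def by blast
        then obtain x where x: "x \<in> X" "y = \<rho> a x" by auto
        then have "x \<noteq> 0" using y r0[OF a] by auto
        then show "\<exists>x\<in>X \<inter> \<rho> a -` Y. x \<noteq> 0" using x y by auto
      qed
    qed
    have inter: "subspace (\<Inter>a\<in>F. \<rho> a -` Y) \<and> binv (\<Inter>a\<in>F. \<rho> a -` Y) \<and> ess (\<Inter>a\<in>F. \<rho> a -` Y)"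
      if "finite F" "F \<subseteq> carrier G" for F
      using that
    proof (induction F rule: finite_induct)
      case empty
      have "ess UNIV" unfolding ess_def using subspace_0 by blast
      then show ?case by (simp add: binv_def)
    next
      case (insert a F)
      let ?E1 = "\<rho> a -` Y" and ?E2 = "\<Inter>a\<in>F. \<rho> a -` Y"
      have a: "a \<in> carrier G" using insert.prems by simp
      have e1: "subspace ?E1" "binv ?E1" "ess ?E1" using pre[OF a] by simp_all
      have e2: "subspace ?E2" "binv ?E2" "ess ?E2" using insert.IH insert.prems by simp_all
      have eq: "(\<Inter>a\<in>insert a F. \<rho> a -` Y) = ?E1 \<inter> ?E2" by auto
      show ?case unfolding eq
      proof (intro conjI)
        show "subspace (?E1 \<inter> ?E2)" using e1(1) e2(1) by (rule subspace_inter)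
        show "binv (?E1 \<inter> ?E2)" using binv_int e1(2) e2(2) .
        show "ess (?E1 \<inter> ?E2)"
        proof (rule essI)
          fix X assume X: "subspace X" "binv X" "X \<noteq> {0}"
          obtain x where x: "x \<in> X \<inter> ?E1" "x \<noteq> 0" using essD[OF e1(3) X] by blast
          have "subspace (X \<inter> ?E1)" using X(1) e1(1) by (rule subspace_inter)
          moreover have "binv (X \<inter> ?E1)" using binv_int X(2) e1(2) .
          moreover have "X \<inter> ?E1 \<noteq> {0}" using x by blast
          ultimately obtain z where "z \<in> (X \<inter> ?E1) \<inter> ?E2" "z \<noteq> 0"
            using essD[OF e2(3)] by blast
          then show "\<exists>x\<in>X \<inter> (?E1 \<inter> ?E2). x \<noteq> 0" by blast
        qed
      qed
    qed
    define Z where "Z = (\<Inter>a\<in>carrier G. \<rho> a -` Y)"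
    have Zp: "subspace Z" "binv Z" "ess Z" using inter[OF assms(2) subset_refl] unfolding Z_def by simp_all
    have "binv UNIV" unfolding binv_def by simp
    then have "\<exists>z\<in>UNIV \<inter> Z. z \<noteq> 0" using essD[OF Zp(3) subspace_UNIV _ nz] by blast
    then have Znz: "Z \<noteq> {0}" by blast
    have "\<forall>c\<in>carrier G. \<rho> c ` Z \<subseteq> Z"
    proof (intro ballI subsetI)
      fix c v assume c: "c \<in> carrier G" and "v \<in> \<rho> c ` Z"
      then obtain z where z: "z \<in> Z" "v = \<rho> c z" by auto
      show "v \<in> Z" unfolding Z_def
      proof (intro InterI, clarsimp)
        fix a assume a: "a \<in> carrier G"
        have ac: "a \<otimes>\<^bsub>H\<^esub> c \<in> carrier G" using a c gH cGH
          by (metis group.is_monoid monoid.m_closed)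
        have "\<rho> a v = \<rho> (a \<otimes>\<^bsub>H\<^esub> c) z" using homr[OF a c] z by simp
        then show "\<rho> a v \<in> Y" using z ac unfolding Z_def by auto
      qed
    qed
    then have "Z = {0} \<or> Z = UNIV" using irr[OF Zp(1)] Zp(2) unfolding binv_def by simp
    then have ZU: "Z = UNIV" using Znz by simp
    have one: "\<one>\<^bsub>H\<^esub> \<in> carrier G" using monoid.one_closed[OF group.is_monoid[OF gH]] cGH by simp
    have rid: "\<rho> (\<one>\<^bsub>H\<^esub>) v = v" for v
    proof -
      have "\<rho> (\<one>\<^bsub>H\<^esub>) = \<rho> (\<one>\<^bsub>H\<^esub>) \<circ> \<rho> (\<one>\<^bsub>H\<^esub>)"
        proof -
        have "\<one>\<^bsub>H\<^esub> \<otimes>\<^bsub>H\<^esub> \<one>\<^bsub>H\<^esub> = \<one>\<^bsub>H\<^esub>"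
          using monoid.l_one[OF group.is_monoid[OF gH] monoid.one_closed[OF group.is_monoid[OF gH]]] .
        then show ?thesis using homr[OF one one] by simp
      qed
      then have "\<rho> (\<one>\<^bsub>H\<^esub>) (\<rho> (\<one>\<^bsub>H\<^esub>) v) = \<rho> (\<one>\<^bsub>H\<^esub>) v" by (metis comp_apply)
      then show ?thesis using rinj[OF one] by blast
    qed
    have YU: "Y = UNIV"
    proof
      show "UNIV \<subseteq> Y"
      proof
        fix v :: 'v
        have "v \<in> Z" using ZU by simp
        then have "\<rho> (\<one>\<^bsub>H\<^esub>) v \<in> Y" using one unfolding Z_def by blast
        then show "v \<in> Y" by (simp add: rid)
      qed
    qed simp
    show "\<exists>U. subspace U \<and> (\<forall>a\<in>carrier G. \<beta> a ` U \<subseteq> U) \<and> W \<inter> U = {0} \<and>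
             {w + u |w u. w \<in> W \<and> u \<in> U} = UNIV"
      using sU iU WU YU unfolding Y_def binv_def by blast
  qed
qed

end
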